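(* Let $X$ be an FK-space containing $\phi$ such that every weakly convergent sequence in $X$ converges in the FK-topology of $X$. Then, computed in $X$, $D_p^qS=D_p^qW=D_p^qF=D_p^qF^+$.
   Context: An FK-space is a vector subspace of the space $w$ of all complex sequences with a complete metrizable locally convex topology in which coordinate functionals are continuous; $X'$ is its continuous dual. $\delta^j$ has $1$ in position $j$, $0$ elsewhere; $\phi=\operatorname{span}\{\delta^j\}$. $p(n)<q(n)$ are nonnegative integer sequences with $q(n)\to\infty$. For $x\in w$, $x^{(k)}=\sum_{j=1}^kx_j\delta^j$ and $T_n(x)=\frac{1}{q(n)-p(n)}\sum_{k=p(n)+1}^{q(n)}x^{(k)}$. $D_p^qS=\{x\in X: T_n(x)\to x\text{ in }X\}$; $D_p^qW=\{x\in X: f(T_n(x))\to f(x)\ \forall f\in X'\}$; $D_p^qF^+=\{x\in w:\lim_n f(T_n(x))\text{ exists }\forall f\in X'\}$ (i.e. $(T_n(x))$ is weakly Cauchy in $X$); $D_p^qF=D_p^qF^+\cap X$. *)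

theory Defs
  imports "HOL-Analysis.Analysis"
begin

text \<open>Sequences are indexed from 0 (coordinate j of x is x j).\<close>

type_synonym seqc = "nat \<Rightarrow> complex"

definition linear_subspace_w :: "seqc set \<Rightarrow> bool" where
  "linear_subspace_w X \<longleftrightarrow> (\<lambda>j. 0) \<in> X \<and>
     (\<forall>x\<in>X. \<forall>y\<in>X. (\<lambda>j. x j + y j) \<in> X) \<and>
     (\<forall>c::complex. \<forall>x\<in>X. (\<lambda>j. c * x j) \<in> X)"

definition convex_w :: "seqc set \<Rightarrow> bool" where
  "convex_w V \<longleftrightarrow> (\<forall>x\<in>V. \<forall>y\<in>V. \<forall>t::real. 0 \<le> t \<and> t \<le> 1 \<longrightarrow>
      (\<lambda>j. complex_of_real t * x j + complex_of_real (1 - t) * y j) \<in> V)"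

definition FK_space :: "seqc set \<Rightarrow> seqc topology \<Rightarrow> bool" where
  "FK_space X T \<longleftrightarrow> linear_subspace_w X \<and> topspace T = X \<and>
     continuous_map (prod_topology T T) T (\<lambda>(x, y). (\<lambda>j. x j + y j)) \<and>
     continuous_map (prod_topology (euclidean :: complex topology) T) T (\<lambda>(c, x). (\<lambda>j. c * x j)) \<and>
     (\<forall>U x. openin T U \<and> x \<in> U \<longrightarrow> (\<exists>V. openin T V \<and> convex_w V \<and> x \<in> V \<and> V \<subseteq> U)) \<and>
     completely_metrizable_space T \<and>
     (\<forall>j. continuous_map T (euclidean :: complex topology) (\<lambda>x. x j))"

definition phi_space :: "seqc set" where
  "phi_space = {x. finite {j. x j \<noteq> 0}}"

definition dual_FK :: "seqc set \<Rightarrow> seqc topology \<Rightarrow> (seqc \<Rightarrow> complex) set" where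
  "dual_FK X T = {f. (\<forall>x\<in>X. \<forall>y\<in>X. \<forall>a b::complex.
        f (\<lambda>j. a * x j + b * y j) = a * f x + b * f y) \<and>
      continuous_map T (euclidean :: complex topology) f}"

definition section_k :: "nat \<Rightarrow> seqc \<Rightarrow> seqc" where
  "section_k k x = (\<lambda>j. if j < k then x j else 0)"

definition T_mean :: "(nat \<Rightarrow> nat) \<Rightarrow> (nat \<Rightarrow> nat) \<Rightarrow> nat \<Rightarrow> seqc \<Rightarrow> seqc" where
  "T_mean p q n x = (\<lambda>j. (\<Sum>k\<in>{p n<..q n}. section_k k x j) / of_nat (q n - p n))"

definition DS :: "seqc set \<Rightarrow> seqc topology \<Rightarrow> (nat \<Rightarrow> nat) \<Rightarrow> (nat \<Rightarrow> nat) \<Rightarrow> seqc set" where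
  "DS X T p q = {x \<in> X. limitin T (\<lambda>n. T_mean p q n x) x sequentially}"

definition DW :: "seqc set \<Rightarrow> seqc topology \<Rightarrow> (nat \<Rightarrow> nat) \<Rightarrow> (nat \<Rightarrow> nat) \<Rightarrow> seqc set" where
  "DW X T p q = {x \<in> X. \<forall>f \<in> dual_FK X T. (\<lambda>n. f (T_mean p q n x)) \<longlonglongrightarrow> f x}"

definition DFplus :: "seqc set \<Rightarrow> seqc topology \<Rightarrow> (nat \<Rightarrow> nat) \<Rightarrow> (nat \<Rightarrow> nat) \<Rightarrow> seqc set" where
  "DFplus X T p q = {x. \<forall>f \<in> dual_FK X T. convergent (\<lambda>n. f (T_mean p q n x))}"

definition DF :: "seqc set \<Rightarrow> seqc topology \<Rightarrow> (nat \<Rightarrow> nat) \<Rightarrow> (nat \<Rightarrow> nat) \<Rightarrow> seqc set" where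
  "DF X T p q = DFplus X T p q \<inter> X"

end

theory Submission
  imports Defs
begin

lemma FK_lin:
  assumes "FK_space X T"
  shows "(\<lambda>j. 0) \<in> X" "\<And>x y. x \<in> X \<Longrightarrow> y \<in> X \<Longrightarrow> (\<lambda>j. x j + y j) \<in> X"
    "\<And>x y. x \<in> X \<Longrightarrow> y \<in> X \<Longrightarrow> (\<lambda>j. x j - y j) \<in> X"
    "\<And>x. x \<in> X \<Longrightarrow> (\<lambda>j. - x j) \<in> X"
    "topspace T = X"
proof -
  have L: "linear_subspace_w X" and top: "topspace T = X" using assms by (auto simp: FK_space_def)
  show "(\<lambda>j. 0) \<in> X" using L by (simp add: linear_subspace_w_def)
  show A: "\<And>x y. x \<in> X \<Longrightarrow> y \<in> X \<Longrightarrow> (\<lambda>j. x j + y j) \<in> X" using L by (simp add: linear_subspace_w_def)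
  show N: "\<And>x. x \<in> X \<Longrightarrow> (\<lambda>j. - x j) \<in> X"
  proof -
    fix x assume "x \<in> X"
    then have "(\<lambda>j. (-1) * x j) \<in> X" using L unfolding linear_subspace_w_def by blast
    then show "(\<lambda>j. - x j) \<in> X" by simp
  qed
  show "\<And>x y. x \<in> X \<Longrightarrow> y \<in> X \<Longrightarrow> (\<lambda>j. x j - y j) \<in> X"
  proof -
    fix x y assume "x \<in> X" "y \<in> X"
    then have "(\<lambda>j. x j + (\<lambda>j. - y j) j) \<in> X" using A N by blast
    then show "(\<lambda>j. x j - y j) \<in> X" by simp
  qed
  show "topspace T = X" by (rule top)
qed

lemma FK_add_cont:
  assumes "FK_space X T"
  shows "continuous_map (prod_topology T T) T (\<lambda>(x, y). (\<lambda>j. x j + y j))"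
  using assms by (simp add: FK_space_def)

lemma FK_transl_cont:
  assumes "FK_space X T" "c \<in> X"
  shows "continuous_map T T (\<lambda>x. (\<lambda>j. x j + c j))"
proof -
  have "continuous_map T (prod_topology T T) (\<lambda>x. (x, c))"
    using assms FK_lin(5)[OF assms(1)] by (intro continuous_map_pairedI) auto
  from continuous_map_compose[OF this FK_add_cont[OF assms(1)]]
  show ?thesis by (simp add: o_def)
qed

lemma FK_Cauchy_conv:
  assumes FK: "FK_space X T" and sX: "\<And>n. s n \<in> X"
    and C: "\<And>U. openin T U \<Longrightarrow> (\<lambda>j. 0) \<in> U \<Longrightarrow> (\<exists>N. \<forall>n\<ge>N. \<forall>m\<ge>N. (\<lambda>j. s n j - s m j) \<in> U)"
  shows "\<exists>z\<in>X. limitin T s z sequentially"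
proof -
  have cm: "completely_metrizable_space T" using FK by (simp add: FK_space_def)
  then obtain M d where Ms: "Metric_space M d" and mc: "Metric_space.mcomplete M d"
    and Tm: "T = Metric_space.mtopology M d"
    unfolding completely_metrizable_space_def by blast
  interpret Metric_space M d by (rule Ms)
  have MX: "M = X" using FK_lin(5)[OF FK] Tm by simp
  note lin = FK_lin[OF FK]
  define H where "H k = {y\<in>X. \<exists>N. \<forall>n\<ge>N. \<forall>m\<ge>N. d (\<lambda>j. y j + s n j) (\<lambda>j. y j + s m j) < 1 / real (Suc k)}" for k
  define G where "G k = T interior_of H k" for k
  have dense: "T closure_of G k = topspace T" for k
    unfolding dense_intersects_open
  proof (intro allI impI)
    fix Op assume "openin T Op \<and> Op \<noteq> {}"
    then have Oo: "openin T Op" and "Op \<noteq> {}" by auto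
    then obtain y0 where y0: "y0 \<in> Op" by blast
    have y0X: "y0 \<in> X" using openin_subset[OF Oo] y0 lin(5) by auto
    define U0 where "U0 = {z \<in> topspace T. (\<lambda>j. z j + y0 j) \<in> Op}"
    have U0o: "openin T U0" unfolding U0_def
      by (rule openin_continuous_map_preimage[OF FK_transl_cont[OF FK y0X] Oo])
    have "(\<lambda>j. 0) \<in> U0" using y0 lin by (simp add: U0_def)
    then obtain N0 where N0: "\<forall>n\<ge>N0. \<forall>m\<ge>N0. (\<lambda>j. s n j - s m j) \<in> U0" using C U0o by blast
    define w where "w = (\<lambda>j. y0 j + s N0 j)"
    have wX: "w \<in> X" unfolding w_def using lin y0X sX by blast
    define \<epsilon> where "\<epsilon> = 1 / real (Suc k) / 2"
    have \<epsilon>: "\<epsilon> > 0" by (simp add: \<epsilon>_def)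
    define V0 where "V0 = {z \<in> topspace T. (\<lambda>j. z j + w j) \<in> mball w \<epsilon>}"
    have V0o: "openin T V0" unfolding V0_def
      by (rule openin_continuous_map_preimage[OF FK_transl_cont[OF FK wX]]) (simp add: Tm)
    define P where "P = {xy \<in> topspace (prod_topology T T). (case xy of (a, b) \<Rightarrow> (\<lambda>j. a j + b j)) \<in> V0}"
    have Po: "openin (prod_topology T T) P" unfolding P_def
      by (rule openin_continuous_map_preimage[OF FK_add_cont[OF FK] V0o])
    have wb: "w \<in> mball w \<epsilon>" using centre_in_mball_iff wX MX \<epsilon> by blast
    have 0: "(\<lambda>j. 0::complex) \<in> topspace T" using lin by simp
    have eqw: "(\<lambda>j. 0 + w j) = w" by simp
    have z0: "(\<lambda>j. 0) \<in> V0" unfolding V0_def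
      by (rule CollectI, rule conjI[OF 0], subst eqw, rule wb)
    have "(\<lambda>j. 0 + 0 :: complex) = (\<lambda>j. 0)" by simp
    then have pP: "((\<lambda>j. 0), (\<lambda>j. 0)) \<in> P" unfolding P_def using 0 z0 by (simp add: topspace_prod_topology)
    then obtain A B where AB: "openin T A" "openin T B" "(\<lambda>j. 0) \<in> A" "(\<lambda>j. 0) \<in> B" "A \<times> B \<subseteq> P"
      using Po[unfolded openin_prod_topology_alt, rule_format, OF pP] by blast
    define V1 where "V1 = A \<inter> B"
    have V1o: "openin T V1" "(\<lambda>j. 0) \<in> V1" using AB by (auto simp: V1_def)
    then obtain N1' where N1': "\<forall>n\<ge>N1'. \<forall>m\<ge>N1'. (\<lambda>j. s n j - s m j) \<in> V1" using C[OF V1o(1) V1o(2)] by blast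
    define N1 where "N1 = max N0 N1'"
    define y where "y = (\<lambda>j. y0 j + (s N0 j - s N1 j))"
    have "(\<lambda>j. s N0 j - s N1 j) \<in> U0" using N0 by (simp add: N1_def)
    then have yO: "y \<in> Op" unfolding U0_def y_def by (simp add: add.commute)
    have yX: "y \<in> X" unfolding y_def using lin y0X sX by blast
    define W where "W = {y' \<in> topspace T. (\<lambda>j. y' j + (\<lambda>j. - y j) j) \<in> V1} \<inter> Op"
    have Wo: "openin T W" unfolding W_def
      by (intro openin_Int openin_continuous_map_preimage[OF FK_transl_cont[OF FK lin(4)[OF yX]]] V1o Oo)
    have yW: "y \<in> W" unfolding W_def using yO yX lin V1o by simp
    have WH: "W \<subseteq> H k"
    proof
      fix y' assume y'W: "y' \<in> W"
      then have y'X: "y' \<in> X" unfolding W_def using lin by auto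
      have a: "(\<lambda>j. y' j - y j) \<in> V1" using y'W unfolding W_def by simp
      have near: "d w (\<lambda>j. y' j + s n j) < \<epsilon>" if n: "n \<ge> N1" for n
      proof -
        have b: "(\<lambda>j. s n j - s N1 j) \<in> V1" using N1' n by (simp add: N1_def)
        have "((\<lambda>j. y' j - y j), (\<lambda>j. s n j - s N1 j)) \<in> P" using a b AB(5) V1_def by blast
        then have "(\<lambda>j. (y' j - y j) + (s n j - s N1 j)) \<in> V0" unfolding P_def by simp
        then have "(\<lambda>j. ((y' j - y j) + (s n j - s N1 j)) + w j) \<in> mball w \<epsilon>" unfolding V0_def by simp
        moreover have "(\<lambda>j. ((y' j - y j) + (s n j - s N1 j)) + w j) = (\<lambda>j. y' j + s n j)"
          by (simp add: y_def w_def algebra_simps)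
        ultimately show ?thesis by simp
      qed
      have inM: "(\<lambda>j. y' j + s n j) \<in> M" for n using lin y'X sX MX by blast
      have "d (\<lambda>j. y' j + s n j) (\<lambda>j. y' j + s m j) < 1 / real (Suc k)" if "n \<ge> N1" "m \<ge> N1" for n m
      proof -
        have "d (\<lambda>j. y' j + s n j) (\<lambda>j. y' j + s m j) \<le> d (\<lambda>j. y' j + s n j) w + d w (\<lambda>j. y' j + s m j)"
          using triangle inM wX MX by blast
        also have "\<dots> < \<epsilon> + \<epsilon>"
        proof -
          have "d (\<lambda>j. y' j + s n j) w = d w (\<lambda>j. y' j + s n j)" by (rule commute)
          then show ?thesis using near[OF that(1)] near[OF that(2)] by linarith
        qed
        also have "\<dots> = 1 / real (Suc k)" unfolding \<epsilon>_def by (rule field_sum_of_halves)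
        finally show ?thesis .
      qed
      then show "y' \<in> H k" unfolding H_def using y'X by blast
    qed
    have "W \<subseteq> G k" unfolding G_def by (rule interior_of_maximal[OF WH Wo])
    then show "G k \<inter> Op \<noteq> {}" using yW yO by blast
  qed
  have cl: "mtopology closure_of \<Inter>(range G) = M"
    by (rule metric_Baire_category[OF mc]) (use dense in \<open>auto simp: G_def Tm\<close>)
  have Mne: "M \<noteq> {}" using lin(1) MX by blast
  have "\<Inter>(range G) \<noteq> {}"
  proof
    assume e: "\<Inter>(range G) = {}"
    have "mtopology closure_of ({} :: (nat \<Rightarrow> complex) set) = {}" by (rule closure_of_empty)
    then have "M = {}" using cl unfolding e by simp
    then show False using Mne by simp
  qed
  then obtain y where y: "y \<in> \<Inter>(range G)" by blast
  have yH: "y \<in> H k" for k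
  proof -
    have "y \<in> G k" using y by blast
    then show ?thesis using interior_of_subset[of T "H k"] unfolding G_def by blast
  qed
  have yX: "y \<in> X" using yH[of 0] by (simp add: H_def)
  have "MCauchy (\<lambda>n. (\<lambda>j. y j + s n j))"
    unfolding MCauchy_def
  proof (intro conjI allI impI)
    show "range (\<lambda>n j. y j + s n j) \<subseteq> M" using lin yX sX MX by blast
    fix e :: real assume "e > 0"
    from reals_Archimedean[OF \<open>e > 0\<close>] obtain k where "inverse (real (Suc k)) < e" by blast
    then have k: "1 / real (Suc k) < e" by (simp add: inverse_eq_divide)
    obtain N where N: "\<forall>n\<ge>N. \<forall>m\<ge>N. d (\<lambda>j. y j + s n j) (\<lambda>j. y j + s m j) < 1 / real (Suc k)"
      using yH[of k] by (auto simp: H_def)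
    then have "\<forall>n n'. N \<le> n \<longrightarrow> N \<le> n' \<longrightarrow> d (\<lambda>j. y j + s n j) (\<lambda>j. y j + s n' j) < e"
    proof (intro allI impI)
      fix n n' assume "N \<le> n" "N \<le> n'"
      then have "d (\<lambda>j. y j + s n j) (\<lambda>j. y j + s n' j) < 1 / real (Suc k)" using N by blast
      then show "d (\<lambda>j. y j + s n j) (\<lambda>j. y j + s n' j) < e" using k by linarith
    qed
    then show "\<exists>N. \<forall>n n'. N \<le> n \<longrightarrow> N \<le> n' \<longrightarrow> d (\<lambda>j. y j + s n j) (\<lambda>j. y j + s n' j) < e"
      by blast
  qed
  then obtain z' where z': "limitin T (\<lambda>n. (\<lambda>j. y j + s n j)) z' sequentially"
    using mc unfolding mcomplete_def Tm by blast
  from continuous_map_limit[OF FK_transl_cont[OF FK lin(4)[OF yX]] z']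
  have "limitin T (\<lambda>n. s n) (\<lambda>j. z' j + - y j) sequentially" by (simp add: o_def)
  moreover have "(\<lambda>j. z' j + - y j) \<in> X"
  proof -
    have "z' \<in> X" using limitin_topspace[OF z'] lin(5) by simp
    then show ?thesis using lin(2)[OF _ lin(4)[OF yX]] by blast
  qed
  ultimately show ?thesis by blast
qed

lemma T_mean_phi: "T_mean p q n x \<in> phi_space"
proof -
  have "{j. T_mean p q n x j \<noteq> 0} \<subseteq> {..<q n}"
  proof
    fix j assume j: "j \<in> {j. T_mean p q n x j \<noteq> 0}"
    show "j \<in> {..<q n}"
    proof (rule ccontr)
      assume "j \<notin> {..<q n}"
      then have "\<forall>k\<in>{p n<..q n}. section_k k x j = 0" by (auto simp: section_k_def)
      then have "T_mean p q n x j = 0" by (simp add: T_mean_def)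
      then show False using j by simp
    qed
  qed
  then show ?thesis unfolding phi_space_def by (auto intro: finite_subset)
qed

lemma T_mean_eq:
  "T_mean p q n x j = of_nat (q n - max (p n) j) * x j / of_nat (q n - p n)"
proof -
  have S: "{k \<in> {p n<..q n}. j < k} = {max (p n) j<..q n}" by auto
  have "(\<Sum>k\<in>{p n<..q n}. section_k k x j) = (\<Sum>k\<in>{k \<in> {p n<..q n}. j < k}. x j)"
    unfolding section_k_def by (subst sum.inter_filter) auto
  also have "\<dots> = of_nat (q n - max (p n) j) * x j" unfolding S by simp
  finally show ?thesis by (simp add: T_mean_def)
qed

lemma T_mean_coord:
  assumes pq: "\<And>n. p n < q n" and qlim: "filterlim q at_top sequentially"
  shows "(\<lambda>n. T_mean p q n x j) \<longlonglongrightarrow> x j"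
proof -
  have rq: "filterlim (\<lambda>n. real (q n)) at_top sequentially"
    by (rule filterlim_compose[OF filterlim_real_sequentially qlim])
  have ev: "eventually (\<lambda>n. Suc j \<le> q n) sequentially"
    using qlim by (simp add: filterlim_at_top)
  have den: "filterlim (\<lambda>n. - real j + real (q n)) at_top sequentially"
    by (rule filterlim_tendsto_add_at_top[OF tendsto_const rq])
  have lim0: "(\<lambda>n. norm (x j) * (real j / (- real j + real (q n)))) \<longlonglongrightarrow> 0"
    using tendsto_mult_right_zero[OF tendsto_divide_0[OF tendsto_const filterlim_at_top_imp_at_infinity[OF den]]]
    by simp
  have bound: "eventually (\<lambda>n. norm (T_mean p q n x j - x j) \<le> norm (x j) * (real j / (- real j + real (q n)))) sequentially"
    using ev
  proof eventually_elim
    case (elim n)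
    define a where "a = q n - max (p n) j"
    define b where "b = q n - p n"
    have b0: "real b > 0" using pq[of n] by (simp add: b_def)
    have "T_mean p q n x j - x j = x j * of_real (real a / real b - 1)"
      using b0 by (simp add: T_mean_eq a_def[symmetric] b_def[symmetric] field_simps)
    then have "norm (T_mean p q n x j - x j) = norm (x j) * \<bar>real a / real b - 1\<bar>"
      by (simp only: norm_mult norm_of_real)
    moreover have "\<bar>real a / real b - 1\<bar> \<le> real j / (- real j + real (q n))"
    proof (cases "p n \<le> j")
      case True
      then have ab: "real b - real a = real j - real (p n)" "real a = real (q n) - real j"
        using elim pq[of n] by (auto simp: a_def b_def of_nat_diff)
      have "\<bar>real a / real b - 1\<bar> = (real b - real a) / real b" using b0 ab True
        by (simp add: field_simps)
      also have "\<dots> \<le> real j / real b" using ab b0 by (intro divide_right_mono) auto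
      also have "\<dots> \<le> real j / (- real j + real (q n))"
        using True elim ab b0 by (intro divide_left_mono) (auto simp: b_def of_nat_diff)
      finally show ?thesis .
    next
      case False
      then have "a = b" by (simp add: a_def b_def)
      then show ?thesis using b0 elim by simp
    qed
    ultimately show ?case by (metis mult_left_mono norm_ge_zero)
  qed
  show ?thesis
    by (rule LIM_zero_cancel[OF Lim_null_comparison[OF bound lim0]])
qed

lemma weak_cauchy_TVS:
  assumes FK: "FK_space X T" and sX: "\<And>n. s n \<in> X"
    and H5: "\<And>s x. (\<forall>n. s n \<in> X) \<Longrightarrow> x \<in> X \<Longrightarrow>
            (\<forall>f \<in> dual_FK X T. (\<lambda>n. f (s n)) \<longlonglongrightarrow> f x) \<Longrightarrow>
            limitin T s x sequentially"
    and wc: "\<forall>f\<in>dual_FK X T. convergent (\<lambda>n. f (s n))"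
    and U: "openin T U" "(\<lambda>j. 0) \<in> U"
  shows "\<exists>N. \<forall>n\<ge>N. \<forall>m\<ge>N. (\<lambda>j. s n j - s m j) \<in> U"
proof (rule ccontr)
  assume neg: "\<not> ?thesis"
  have ex: "\<exists>nm. fst nm \<ge> N \<and> snd nm \<ge> N \<and> (\<lambda>j. s (fst nm) j - s (snd nm) j) \<notin> U" for N
  proof -
    from neg obtain n m where "n \<ge> N" "m \<ge> N" "(\<lambda>j. s n j - s m j) \<notin> U" by blast
    then show ?thesis by (intro exI[of _ "(n, m)"]) simp
  qed
  have ex': "\<forall>N. \<exists>nm. fst nm \<ge> N \<and> snd nm \<ge> N \<and> (\<lambda>j. s (fst nm) j - s (snd nm) j) \<notin> U"
    using ex by blast
  from choice[OF ex'] obtain g where g: "\<forall>N. fst (g N) \<ge> N \<and> snd (g N) \<ge> N \<and> (\<lambda>j. s (fst (g N)) j - s (snd (g N)) j) \<notin> U"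
    by blast
  define nn where "nn N = fst (g N)" for N
  define mm where "mm N = snd (g N)" for N
  have nm: "\<And>N. nn N \<ge> N \<and> mm N \<ge> N \<and> (\<lambda>j. s (nn N) j - s (mm N) j) \<notin> U"
    using g by (simp add: nn_def mm_def)
  define t where "t N = (\<lambda>j. s (nn N) j - s (mm N) j)" for N
  have tX: "\<forall>N. t N \<in> X" using FK_lin(3)[OF FK] sX t_def by auto
  have nnl: "filterlim nn sequentially sequentially"
    by (rule filterlim_at_top_mono[OF filterlim_ident]) (use nm in auto)
  have mml: "filterlim mm sequentially sequentially"
    by (rule filterlim_at_top_mono[OF filterlim_ident]) (use nm in auto)
  have "\<forall>f\<in>dual_FK X T. (\<lambda>N. f (t N)) \<longlonglongrightarrow> f (\<lambda>j. 0)"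
  proof
    fix f assume f: "f \<in> dual_FK X T"
    then have lin: "\<And>x y a b. x\<in>X \<Longrightarrow> y\<in>X \<Longrightarrow> f (\<lambda>j. a * x j + b * y j) = a * f x + b * f y"
      by (simp add: dual_FK_def)
    have "f (\<lambda>j. 1 * 0 + 1 * 0) = 1 * f (\<lambda>j. 0) + 1 * f (\<lambda>j. 0)"
      using lin[of "\<lambda>j. 0" "\<lambda>j. 0" 1 1] FK_lin(1)[OF FK] by simp
    then have f0: "f (\<lambda>j. 0) = 0" by simp
    have ft: "f (t N) = f (s (nn N)) - f (s (mm N))" for N
    proof -
      have "f (\<lambda>j. 1 * s (nn N) j + (-1) * s (mm N) j) = 1 * f (s (nn N)) + (-1) * f (s (mm N))"
        by (rule lin[OF sX sX])
      moreover have "(\<lambda>j. 1 * s (nn N) j + (-1) * s (mm N) j) = t N" by (simp add: t_def)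
      ultimately show ?thesis by simp
    qed
    obtain L where L: "(\<lambda>n. f (s n)) \<longlonglongrightarrow> L" using wc f by (auto simp: convergent_def)
    have "(\<lambda>N. f (s (nn N)) - f (s (mm N))) \<longlonglongrightarrow> L - L"
      by (intro tendsto_diff filterlim_compose[OF L nnl] filterlim_compose[OF L mml])
    then show "(\<lambda>N. f (t N)) \<longlonglongrightarrow> f (\<lambda>j. 0)" by (simp add: ft f0)
  qed
  then have "limitin T t (\<lambda>j. 0) sequentially" by (rule H5[OF tX FK_lin(1)[OF FK]])
  then obtain N where "\<forall>n. N \<le> n \<longrightarrow> t n \<in> U" using U unfolding limitin_sequentially by blast
  then show False using nm[of N] by (simp add: t_def)
qed

theorem mainTheorem19:
  fixes X :: "(nat \<Rightarrow> complex) set" and T :: "(nat \<Rightarrow> complex) topology"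
    and p q :: "nat \<Rightarrow> nat"
  assumes "FK_space X T"
    and "phi_space \<subseteq> X"
    and "\<And>n. p n < q n"
    and "filterlim q at_top sequentially"
    and "\<And>s x. (\<forall>n. s n \<in> X) \<Longrightarrow> x \<in> X \<Longrightarrow>
            (\<forall>f \<in> dual_FK X T. (\<lambda>n. f (s n)) \<longlonglongrightarrow> f x) \<Longrightarrow>
            limitin T s x sequentially"
  shows "DS X T p q = DW X T p q \<and> DW X T p q = DF X T p q \<and> DF X T p q = DFplus X T p q"
proof -
  note FK = assms(1)
  have sX: "\<And>n. T_mean p q n x \<in> X" for x using T_mean_phi assms(2) by blast
  have 1: "DS X T p q \<subseteq> DW X T p q"
  proof
    fix x assume "x \<in> DS X T p q"
    then have xX: "x \<in> X" and lx: "limitin T (\<lambda>n. T_mean p q n x) x sequentially" by (auto simp: DS_def)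
    have "(\<lambda>n. f (T_mean p q n x)) \<longlonglongrightarrow> f x" if f: "f \<in> dual_FK X T" for f
    proof -
      have "continuous_map T euclidean f" using f by (simp add: dual_FK_def)
      from continuous_map_limit[OF this lx] show ?thesis by (simp add: o_def)
    qed
    then show "x \<in> DW X T p q" using xX by (simp add: DW_def)
  qed
  have 2: "DW X T p q \<subseteq> DF X T p q"
    by (auto simp: DW_def DF_def DFplus_def convergent_def)
  have 3: "DF X T p q \<subseteq> DFplus X T p q" by (auto simp: DF_def)
  have 4: "DFplus X T p q \<subseteq> DS X T p q"
  proof
    fix x assume x: "x \<in> DFplus X T p q"
    have C: "\<exists>N. \<forall>n\<ge>N. \<forall>m\<ge>N. (\<lambda>j. T_mean p q n x j - T_mean p q m x j) \<in> U"
      if "openin T U" "(\<lambda>j. 0) \<in> U" for U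
      by (rule weak_cauchy_TVS[OF FK sX assms(5)]) (use x that in \<open>auto simp: DFplus_def\<close>)
    obtain z where zX: "z \<in> X" and lz: "limitin T (\<lambda>n. T_mean p q n x) z sequentially"
      using FK_Cauchy_conv[OF FK sX C] by blast
    have "z j = x j" for j
    proof -
      have "continuous_map T euclidean (\<lambda>x. x j)" using FK by (simp add: FK_space_def)
      from continuous_map_limit[OF this lz]
      have "(\<lambda>n. T_mean p q n x j) \<longlonglongrightarrow> z j" by (simp add: o_def)
      moreover have "(\<lambda>n. T_mean p q n x j) \<longlonglongrightarrow> x j" by (rule T_mean_coord[OF assms(3,4)])
      ultimately show ?thesis by (rule LIMSEQ_unique)
    qed
    then have "z = x" by auto
    then show "x \<in> DS X T p q" using zX lz by (simp add: DS_def)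
  qed
  show ?thesis using 1 2 3 4 by blast
qed

end
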